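(* The AllSet framework, as well as its extension with residual connections, are special cases of the MultiSet framework. Precisely: given any functions $f_{\mathcal{V}\to\mathcal{E}}, f_{\mathcal{E}\to\mathcal{V}}$, each permutation invariant in its first argument, defining an AllSet scheme $$\bm z_e^{(t+1)} = f_{\mathcal{V}\to\mathcal{E}}\big(\{\bm x_u^{(t)}\}_{u\in e};\ \bm z_e^{(t)}\big),\qquad \bm x_v^{(t+1)} = f_{\mathcal{E}\to\mathcal{V}}\big(\{\bm z_e^{(t+1)}\}_{e\in\mathcal{E}_v};\ \bm x_v^{(t)}\big)$$ (or the extended AllSet scheme in which the node update is instead $\bm x_v^{(t+1)} = f_{\mathcal{E}\to\mathcal{V}}\big(\{\bm z_e^{(t+1)}\}_{e\in\mathcal{E}_v};\ \{\bm x_v^{(k)}\}_{k=0}^{t}\big)$), run for $T$ steps, there is a choice of the MultiSet functions such that the MultiSet scheme reproduces exactly the hyperedge representations $\bm z_e^{(t)}$ and final node representations $\bm x_v^{(T)}$ of that AllSet (respectively extended AllSet) scheme.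
   Context: A hypergraph is $\mathcal{G}=(\mathcal{V},\mathcal{E})$ with each hyperedge $e\in\mathcal{E}$ a subset of $\mathcal{V}$; $\mathcal{E}_v=\{e\in\mathcal{E}:v\in e\}$ and $d_v=|\mathcal{E}_v|$. A function is called a multiset function if it is permutation invariant with respect to each of its (set-valued) arguments in turn. MultiSet framework: each hyperedge $e$ has a representation $\bm z_e^{(t)}\in\mathbb{R}^d$ at step $t$; each node $v$ has one representation $\bm x_{v,e}^{(t)}\in\mathbb{R}^f$ for each hyperedge $e\in\mathcal{E}_v$, and $\mathbb{X}_v^{(t)}=\{\bm x_{v,e}^{(t)}\}_{e\in\mathcal{E}_v}$. The updates are $$\bm z_e^{(t+1)}=f_{\mathcal{V}\to\mathcal{E}}\big(\{\mathbb{X}_u^{(t)}\}_{u\in e};\ \bm z_e^{(t)}\big),\qquad \bm x_{v,e}^{(t+1)}=f_{\mathcal{E}\to\mathcal{V}}\big(\{\bm z_{e}^{(t+1)}\}_{e\in\mathcal{E}_v};\ \{\mathbb{X}_v^{(k)}\}_{k=0}^{t}\big),$$ and after $T$ steps a readout $\bm x_v^{(T)}=f_{\mathcal{V}\to\mathcal{V}}\big(\{\mathbb{X}_v^{(k)}\}_{k=0}^{T}\big)$, where $f_{\mathcal{V}\to\mathcal{E}}, f_{\mathcal{E}\to\mathcal{V}}$ are multiset functions with respect to their first input and $f_{\mathcal{V}\to\mathcal{V}}$ is a multiset function. *)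

theory Defs
  imports "HOL-Analysis.Analysis" "HOL-Library.Multiset"
begin

definition incident :: "'v set set \<Rightarrow> 'v \<Rightarrow> 'v set set" where
  "incident E v = {e \<in> E. v \<in> e}"

definition hypergraph :: "'v set \<Rightarrow> 'v set set \<Rightarrow> bool" where
  "hypergraph V E \<longleftrightarrow> finite V \<and> (\<forall>e\<in>E. e \<subseteq> V)"

text \<open>AllSet scheme. Functions permutation invariant in their first argument are
  represented as functions of a multiset. State at step t: (z^(t), x^(t)).\<close>
fun allset ::
  "('x multiset \<Rightarrow> 'z \<Rightarrow> 'z) \<Rightarrow> ('z multiset \<Rightarrow> 'x \<Rightarrow> 'x) \<Rightarrow> 'v set set \<Rightarrow>
   ('v set \<Rightarrow> 'z) \<Rightarrow> ('v \<Rightarrow> 'x) \<Rightarrow> nat \<Rightarrow> ('v set \<Rightarrow> 'z) \<times> ('v \<Rightarrow> 'x)" where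
  "allset fVE fEV E z0 x0 0 = (z0, x0)"
| "allset fVE fEV E z0 x0 (Suc t) =
     (let (z, x) = allset fVE fEV E z0 x0 t;
          z' = (\<lambda>e. fVE (image_mset x (mset_set e)) (z e));
          x' = (\<lambda>v. fEV (image_mset z' (mset_set (incident E v))) (x v))
      in (z', x'))"

fun ext_allset ::
  "('x multiset \<Rightarrow> 'z \<Rightarrow> 'z) \<Rightarrow> ('z multiset \<Rightarrow> 'x list \<Rightarrow> 'x) \<Rightarrow> 'v set set \<Rightarrow>
   ('v set \<Rightarrow> 'z) \<Rightarrow> ('v \<Rightarrow> 'x) \<Rightarrow> nat \<Rightarrow> ('v set \<Rightarrow> 'z) \<times> ('v \<Rightarrow> 'x list)" where
  "ext_allset fVE fEV E z0 x0 0 = (z0, (\<lambda>v. [x0 v]))"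
| "ext_allset fVE fEV E z0 x0 (Suc t) =
     (let (z, xs) = ext_allset fVE fEV E z0 x0 t;
          z' = (\<lambda>e. fVE (image_mset (\<lambda>u. last (xs u)) (mset_set e)) (z e));
          x' = (\<lambda>v. fEV (image_mset z' (mset_set (incident E v))) (xs v))
      in (z', (\<lambda>v. xs v @ [x' v])))"

definition Xof :: "'v set set \<Rightarrow> ('v \<Rightarrow> 'v set \<Rightarrow> 'x) \<Rightarrow> 'v \<Rightarrow> 'x multiset" where
  "Xof E x v = image_mset (x v) (mset_set (incident E v))"

text \<open>The first argument of gVE is the multiset {X_u}_{u in e};
  the second argument of gEV is the list [X_v^(0), ..., X_v^(t)].\<close>
fun multiset_scheme ::
  "('x multiset multiset \<Rightarrow> 'z \<Rightarrow> 'z) \<Rightarrow> ('z multiset \<Rightarrow> 'x multiset list \<Rightarrow> 'x) \<Rightarrow>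
   'v set set \<Rightarrow> ('v set \<Rightarrow> 'z) \<Rightarrow> ('v \<Rightarrow> 'v set \<Rightarrow> 'x) \<Rightarrow> nat \<Rightarrow>
   ('v set \<Rightarrow> 'z) \<times> ('v \<Rightarrow> 'v set \<Rightarrow> 'x) list" where
  "multiset_scheme gVE gEV E z0 x0 0 = (z0, [x0])"
| "multiset_scheme gVE gEV E z0 x0 (Suc t) =
     (let (z, xh) = multiset_scheme gVE gEV E z0 x0 t;
          z' = (\<lambda>e. gVE (image_mset (Xof E (last xh)) (mset_set e)) (z e));
          x' = (\<lambda>v e. gEV (image_mset z' (mset_set (incident E v))) (map (\<lambda>x. Xof E x v) xh))
      in (z', xh @ [x']))"

definition multiset_readout ::
  "('x multiset list \<Rightarrow> 'x) \<Rightarrow> 'v set set \<Rightarrow> ('v \<Rightarrow> 'v set \<Rightarrow> 'x) list \<Rightarrow> 'v \<Rightarrow> 'x" where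
  "multiset_readout gVV E xh v = gVV (map (\<lambda>x. Xof E x v) xh)"

end

theory Submission
  imports Defs
begin

definition pick :: "'a multiset \<Rightarrow> 'a" where "pick M = (SOME x. x \<in># M)"

lemma pick_const: "M \<noteq> {#} \<Longrightarrow> (\<And>y. y \<in># M \<Longrightarrow> y = c) \<Longrightarrow> pick M = c"
  unfolding pick_def by (metis (mono_tags) multiset_nonemptyE someI_ex)

lemma Xof_pick:
  assumes "finite (incident E v)" "incident E v \<noteq> {}" "\<And>e. x v e = c"
  shows "pick (Xof E x v) = c"
  unfolding Xof_def using assms by (intro pick_const) (auto simp: mset_set_empty_iff)

lemma hg_basic:
  assumes "hypergraph V E" "\<forall>v\<in>V. incident E v \<noteq> {}"
  shows "finite E" "\<And>v. finite (incident E v)" "\<And>e. e \<in> E \<Longrightarrow> finite e" "\<And>e u. e \<in> E \<Longrightarrow> u \<in> e \<Longrightarrow> u \<in> V"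
proof -
  have fV: "finite V" and sub: "\<forall>e\<in>E. e \<subseteq> V" using assms(1) unfolding hypergraph_def by auto
  have "E \<subseteq> Pow V" using sub by auto
  then show fE: "finite E" by (rule finite_subset) (simp add: fV)
  show "\<And>v. finite (incident E v)" unfolding incident_def using fE by auto
  show "\<And>e. e \<in> E \<Longrightarrow> finite e" using sub fV by (meson finite_subset)
  show "\<And>e u. e \<in> E \<Longrightarrow> u \<in> e \<Longrightarrow> u \<in> V" using sub by blast
qed

lemma part1:
  fixes fVE fEV
  assumes H: "hypergraph V E" and NE: "\<forall>v\<in>V. incident E v \<noteq> {}"
  defines "gVE \<equiv> (\<lambda>M z. fVE (image_mset pick M) z)"
    and "gEV \<equiv> (\<lambda>Z hist. fEV Z (pick (last hist)))"
  shows "(\<forall>e\<in>E. fst (multiset_scheme gVE gEV E z0 (\<lambda>v e. x0 v) t) e = fst (allset fVE fEV E z0 x0 t) e)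
     \<and> (\<forall>v\<in>V. \<forall>e. last (snd (multiset_scheme gVE gEV E z0 (\<lambda>v e. x0 v) t)) v e = snd (allset fVE fEV E z0 x0 t) v)
     \<and> snd (multiset_scheme gVE gEV E z0 (\<lambda>v e. x0 v) t) \<noteq> []"
proof (induction t)
  case 0
  then show ?case by simp
next
  case (Suc t)
  note S = hg_basic[OF H NE]
  obtain z xh where M: "multiset_scheme gVE gEV E z0 (\<lambda>v e. x0 v) t = (z, xh)" by (metis prod.exhaust)
  obtain za xa where A: "allset fVE fEV E z0 x0 t = (za, xa)" by (metis prod.exhaust)
  have IH1: "\<forall>e\<in>E. z e = za e" and IH2: "\<forall>v\<in>V. \<forall>e. last xh v e = xa v" and IH3: "xh \<noteq> []"
    using Suc.IH M A by auto
  have P: "pick (Xof E (last xh) u) = xa u" if "u \<in> V" for u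
    by (rule Xof_pick[OF S(2)]) (use that NE IH2 in auto)
  define z' where "z' = (\<lambda>e. fVE (image_mset xa (mset_set e)) (za e))"
  have Z: "gVE (image_mset (Xof E (last xh)) (mset_set e)) (z e) = z' e" if "e \<in> E" for e
  proof -
    have "image_mset pick (image_mset (Xof E (last xh)) (mset_set e)) = image_mset xa (mset_set e)"
      unfolding multiset.map_comp o_def
      by (rule image_mset_cong) (use P S(3,4) that in auto)
    then show ?thesis unfolding gVE_def z'_def using IH1 that by simp
  qed
  have ZZ: "image_mset (\<lambda>e. gVE (image_mset (Xof E (last xh)) (mset_set e)) (z e)) (mset_set (incident E v))
      = image_mset z' (mset_set (incident E v))" for v
    by (rule image_mset_cong) (use Z S(2) in \<open>auto simp: incident_def\<close>)
  have MS: "multiset_scheme gVE gEV E z0 (\<lambda>v e. x0 v) (Suc t) =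
     ((\<lambda>e. gVE (image_mset (Xof E (last xh)) (mset_set e)) (z e)),
      xh @ [\<lambda>v e. gEV (image_mset (\<lambda>e. gVE (image_mset (Xof E (last xh)) (mset_set e)) (z e)) (mset_set (incident E v))) (map (\<lambda>x. Xof E x v) xh)])"
    by (simp add: M Let_def)
  have AS: "allset fVE fEV E z0 x0 (Suc t) = (z', (\<lambda>v. fEV (image_mset z' (mset_set (incident E v))) (xa v)))"
    by (simp add: A Let_def z'_def)
  show ?case
  proof (intro conjI ballI allI)
    fix e assume "e \<in> E" then show "fst (multiset_scheme gVE gEV E z0 (\<lambda>v e. x0 v) (Suc t)) e = fst (allset fVE fEV E z0 x0 (Suc t)) e"
      unfolding MS AS using Z by simp
  next
    fix v e assume v: "v \<in> V"
    show "last (snd (multiset_scheme gVE gEV E z0 (\<lambda>v e. x0 v) (Suc t))) v e = snd (allset fVE fEV E z0 x0 (Suc t)) v"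
      unfolding MS AS ZZ using IH3 P[OF v] by (simp add: gEV_def last_map)
  qed (unfold MS, simp)
qed

lemma part2:
  fixes hVE hEV
  assumes H: "hypergraph V E" and NE: "\<forall>v\<in>V. incident E v \<noteq> {}"
  defines "gVE \<equiv> (\<lambda>M z. hVE (image_mset pick M) z)"
    and "gEV \<equiv> (\<lambda>Z hist. hEV Z (map pick hist))"
  shows "(\<forall>e\<in>E. fst (multiset_scheme gVE gEV E z0 (\<lambda>v e. x0 v) t) e = fst (ext_allset hVE hEV E z0 x0 t) e)
     \<and> (\<forall>v\<in>V. length (snd (multiset_scheme gVE gEV E z0 (\<lambda>v e. x0 v) t)) = length (snd (ext_allset hVE hEV E z0 x0 t) v)
          \<and> (\<forall>k < length (snd (multiset_scheme gVE gEV E z0 (\<lambda>v e. x0 v) t)). \<forall>e.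
              (snd (multiset_scheme gVE gEV E z0 (\<lambda>v e. x0 v) t) ! k) v e = (snd (ext_allset hVE hEV E z0 x0 t) v) ! k))
     \<and> snd (multiset_scheme gVE gEV E z0 (\<lambda>v e. x0 v) t) \<noteq> []"
proof (induction t)
  case 0
  then show ?case by simp
next
  case (Suc t)
  note S = hg_basic[OF H NE]
  obtain z xh where M: "multiset_scheme gVE gEV E z0 (\<lambda>v e. x0 v) t = (z, xh)" by (metis prod.exhaust)
  obtain za xa where A: "ext_allset hVE hEV E z0 x0 t = (za, xa)" by (metis prod.exhaust)
  have IH1: "\<forall>e\<in>E. z e = za e" and IH2: "\<forall>v\<in>V. length xh = length (xa v) \<and> (\<forall>k<length xh. \<forall>e. (xh ! k) v e = xa v ! k)"
    and IH3: "xh \<noteq> []"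
    using Suc.IH M A by auto
  have Pk: "pick (Xof E (xh ! k) u) = xa u ! k" if "u \<in> V" "k < length xh" for u k
    by (rule Xof_pick[OF S(2)]) (use that NE IH2 in auto)
  have MLst: "map (\<lambda>x. pick (Xof E x u)) xh = xa u" if "u \<in> V" for u
    using Pk[OF that] IH2 that by (intro nth_equalityI) auto
  have P: "pick (Xof E (last xh) u) = last (xa u)" if "u \<in> V" for u
    using MLst[OF that] IH3 by (metis last_map)
  define z' where "z' = (\<lambda>e. hVE (image_mset (\<lambda>u. last (xa u)) (mset_set e)) (za e))"
  have Z: "gVE (image_mset (Xof E (last xh)) (mset_set e)) (z e) = z' e" if "e \<in> E" for e
  proof -
    have "image_mset pick (image_mset (Xof E (last xh)) (mset_set e)) = image_mset (\<lambda>u. last (xa u)) (mset_set e)"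
      unfolding multiset.map_comp o_def
      by (rule image_mset_cong) (use P S(3,4) that in auto)
    then show ?thesis unfolding gVE_def z'_def using IH1 that by simp
  qed
  have ZZ: "image_mset (\<lambda>e. gVE (image_mset (Xof E (last xh)) (mset_set e)) (z e)) (mset_set (incident E v))
      = image_mset z' (mset_set (incident E v))" for v
    by (rule image_mset_cong) (use Z S(2) in \<open>auto simp: incident_def\<close>)
  have G: "gEV (image_mset z' (mset_set (incident E v))) (map (\<lambda>x. Xof E x v) xh)
     = hEV (image_mset z' (mset_set (incident E v))) (xa v)" if "v \<in> V" for v
    unfolding gEV_def using MLst[OF that] by (simp add: o_def)
  show ?case
    using IH1 IH2 IH3 Z G
    by (auto simp: M A Let_def z'_def[symmetric] ZZ nth_append)
qed

theorem proposition2: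
  fixes fVE :: "(real ^ 'f) multiset \<Rightarrow> real ^ 'd \<Rightarrow> real ^ 'd"
    and fEV :: "(real ^ 'd) multiset \<Rightarrow> real ^ 'f \<Rightarrow> real ^ 'f"
    and hVE :: "(real ^ 'f) multiset \<Rightarrow> real ^ 'd \<Rightarrow> real ^ 'd"
    and hEV :: "(real ^ 'd) multiset \<Rightarrow> (real ^ 'f) list \<Rightarrow> real ^ 'f"
  shows
   "(\<exists>gVE gEV gVV.
      \<forall>(V :: 'v set) E z0 x0.
        hypergraph V E \<longrightarrow> (\<forall>v\<in>V. incident E v \<noteq> {}) \<longrightarrow>
        (\<forall>t. \<forall>e\<in>E. fst (multiset_scheme gVE gEV E z0 (\<lambda>v e. x0 v) t) e
                      = fst (allset fVE fEV E z0 x0 t) e) \<and>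
        (\<forall>T. \<forall>v\<in>V. multiset_readout gVV E (snd (multiset_scheme gVE gEV E z0 (\<lambda>v e. x0 v) T)) v
                      = snd (allset fVE fEV E z0 x0 T) v))
    \<and>
    (\<exists>gVE gEV gVV.
      \<forall>(V :: 'v set) E z0 x0.
        hypergraph V E \<longrightarrow> (\<forall>v\<in>V. incident E v \<noteq> {}) \<longrightarrow>
        (\<forall>t. \<forall>e\<in>E. fst (multiset_scheme gVE gEV E z0 (\<lambda>v e. x0 v) t) e
                      = fst (ext_allset hVE hEV E z0 x0 t) e) \<and>
        (\<forall>T. \<forall>v\<in>V. multiset_readout gVV E (snd (multiset_scheme gVE gEV E z0 (\<lambda>v e. x0 v) T)) v
                      = last (snd (ext_allset hVE hEV E z0 x0 T) v)))"
proof (intro conjI)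
  show "\<exists>gVE gEV gVV.
      \<forall>(V :: 'v set) E z0 x0.
        hypergraph V E \<longrightarrow> (\<forall>v\<in>V. incident E v \<noteq> {}) \<longrightarrow>
        (\<forall>t. \<forall>e\<in>E. fst (multiset_scheme gVE gEV E z0 (\<lambda>v e. x0 v) t) e
                      = fst (allset fVE fEV E z0 x0 t) e) \<and>
        (\<forall>T. \<forall>v\<in>V. multiset_readout gVV E (snd (multiset_scheme gVE gEV E z0 (\<lambda>v e. x0 v) T)) v
                      = snd (allset fVE fEV E z0 x0 T) v)"
  proof (intro exI allI impI conjI ballI)
    fix V :: "'v set" and E z0 x0 t e T v
    assume H: "hypergraph V E" and NE: "\<forall>v\<in>V. incident E v \<noteq> {}"
    note S = hg_basic[OF H NE]
    show "e \<in> E \<Longrightarrow> fst (multiset_scheme (\<lambda>M z. fVE (image_mset pick M) z) (\<lambda>Z hist. fEV Z (pick (last hist))) E z0 (\<lambda>v e. x0 v) t) e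
          = fst (allset fVE fEV E z0 x0 t) e"
      using part1[OF H NE, of fVE fEV z0 x0 t] by blast
    assume v: "v \<in> V"
    have I: "\<forall>e. last (snd (multiset_scheme (\<lambda>M z. fVE (image_mset pick M) z) (\<lambda>Z hist. fEV Z (pick (last hist))) E z0 (\<lambda>v e. x0 v) T)) v e = snd (allset fVE fEV E z0 x0 T) v"
      and N: "snd (multiset_scheme (\<lambda>M z. fVE (image_mset pick M) z) (\<lambda>Z hist. fEV Z (pick (last hist))) E z0 (\<lambda>v e. x0 v) T) \<noteq> []"
      using part1[OF H NE, of fVE fEV z0 x0 T] v by blast+
    show "multiset_readout (\<lambda>h. pick (last h)) E (snd (multiset_scheme (\<lambda>M z. fVE (image_mset pick M) z) (\<lambda>Z hist. fEV Z (pick (last hist))) E z0 (\<lambda>v e. x0 v) T)) v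
          = snd (allset fVE fEV E z0 x0 T) v"
    proof -
      have "pick (Xof E (last (snd (multiset_scheme (\<lambda>M z. fVE (image_mset pick M) z) (\<lambda>Z hist. fEV Z (pick (last hist))) E z0 (\<lambda>v e. x0 v) T))) v) = snd (allset fVE fEV E z0 x0 T) v"
        by (rule Xof_pick[OF S(2)]) (use NE v I in auto)
      then show ?thesis unfolding multiset_readout_def using N by (simp add: last_map)
    qed
  qed
  show "\<exists>gVE gEV gVV.
      \<forall>(V :: 'v set) E z0 x0.
        hypergraph V E \<longrightarrow> (\<forall>v\<in>V. incident E v \<noteq> {}) \<longrightarrow>
        (\<forall>t. \<forall>e\<in>E. fst (multiset_scheme gVE gEV E z0 (\<lambda>v e. x0 v) t) e
                      = fst (ext_allset hVE hEV E z0 x0 t) e) \<and>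
        (\<forall>T. \<forall>v\<in>V. multiset_readout gVV E (snd (multiset_scheme gVE gEV E z0 (\<lambda>v e. x0 v) T)) v
                      = last (snd (ext_allset hVE hEV E z0 x0 T) v))"
  proof (intro exI allI impI conjI ballI)
    fix V :: "'v set" and E z0 x0 t e T v
    assume H: "hypergraph V E" and NE: "\<forall>v\<in>V. incident E v \<noteq> {}"
    note S = hg_basic[OF H NE]
    show "e \<in> E \<Longrightarrow> fst (multiset_scheme (\<lambda>M z. hVE (image_mset pick M) z) (\<lambda>Z hist. hEV Z (map pick hist)) E z0 (\<lambda>v e. x0 v) t) e
          = fst (ext_allset hVE hEV E z0 x0 t) e"
      using part2[OF H NE, of hVE hEV z0 x0 t] by blast
    assume v: "v \<in> V"
    define xh where "xh = snd (multiset_scheme (\<lambda>M z. hVE (image_mset pick M) z) (\<lambda>Z hist. hEV Z (map pick hist)) E z0 (\<lambda>v e. x0 v) T)"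
    define xa where "xa = snd (ext_allset hVE hEV E z0 x0 T) v"
    have L: "length xh = length xa" and I: "\<forall>k<length xh. \<forall>e. (xh ! k) v e = xa ! k" and N: "xh \<noteq> []"
      using part2[OF H NE, of hVE hEV z0 x0 T] v unfolding xh_def xa_def by blast+
    have LL: "last xh v e = last xa" for e
      using I L N by (metis diff_less last_conv_nth length_greater_0_conv zero_less_one)
    have "pick (Xof E (last xh) v) = last xa"
      by (rule Xof_pick[OF S(2)]) (use NE v LL in auto)
    then show "multiset_readout (\<lambda>h. pick (last h)) E xh v = last xa"
      unfolding multiset_readout_def using N by (simp add: last_map)
  qed
qed

end
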